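(* Let $I$ be an ideal of a ring $R$ with $Nil(R)\subseteq I$. The following are equivalent: (1) idempotents can be lifted uniquely weakly modulo $I$; (2) idempotents can be lifted weakly modulo $I$, $R$ is abelian, and $I$ is idempotent free; (3) idempotents can be lifted centrally weakly modulo $I$, and $I$ is idempotent free.
   Context: All rings are associative with identity; $Idem(R)$ is the set of idempotents and $Nil(R)$ the set of nilpotent elements of $R$. Idempotents can be lifted weakly modulo $I$ if for every $x\in R$ with $x^2-x\in I$ there is $e\in Idem(R)$ with $x-e\in I$ or $x+e\in I$; lifted uniquely weakly modulo $I$ if for every such $x$ there is a unique $e\in Idem(R)$ with $x-e\in I$ or $x+e\in I$; lifted centrally weakly modulo $I$ if for every such $x$ there is a central $e\in Idem(R)$ with $x-e\in I$ or $x+e\in I$. An ideal is idempotent free if the only idempotent it contains is $0$. $R$ is abelian if all its idempotents are central. *)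

theory Defs
  imports Main
begin

definition idem :: "'a::ring_1 \<Rightarrow> bool" where
  "idem e \<longleftrightarrow> e * e = e"

definition Idem :: "'a::ring_1 set" where
  "Idem = {e. idem e}"

definition Nil_set :: "'a::ring_1 set" where
  "Nil_set = {x. \<exists>n. x ^ n = 0}"

definition central :: "'a::ring_1 \<Rightarrow> bool" where
  "central e \<longleftrightarrow> (\<forall>y. e * y = y * e)"

definition is_ideal :: "'a::ring_1 set \<Rightarrow> bool" where
  "is_ideal I \<longleftrightarrow> 0 \<in> I \<and> (\<forall>x\<in>I. \<forall>y\<in>I. x + y \<in> I) \<and> (\<forall>x\<in>I. - x \<in> I)
     \<and> (\<forall>x\<in>I. \<forall>r. r * x \<in> I \<and> x * r \<in> I)"

definition lift_weakly :: "'a::ring_1 set \<Rightarrow> bool" where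
  "lift_weakly I \<longleftrightarrow> (\<forall>x. x\<^sup>2 - x \<in> I \<longrightarrow> (\<exists>e\<in>Idem. x - e \<in> I \<or> x + e \<in> I))"

definition lift_uniquely_weakly :: "'a::ring_1 set \<Rightarrow> bool" where
  "lift_uniquely_weakly I \<longleftrightarrow>
     (\<forall>x. x\<^sup>2 - x \<in> I \<longrightarrow> (\<exists>!e. e \<in> Idem \<and> (x - e \<in> I \<or> x + e \<in> I)))"

definition lift_centrally_weakly :: "'a::ring_1 set \<Rightarrow> bool" where
  "lift_centrally_weakly I \<longleftrightarrow>
     (\<forall>x. x\<^sup>2 - x \<in> I \<longrightarrow> (\<exists>e\<in>Idem. central e \<and> (x - e \<in> I \<or> x + e \<in> I)))"

definition idempotent_free :: "'a::ring_1 set \<Rightarrow> bool" where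
  "idempotent_free I \<longleftrightarrow> (\<forall>e\<in>I. idem e \<longrightarrow> e = 0)"

definition abelian_ring :: "'a::ring_1 itself \<Rightarrow> bool" where
  "abelian_ring _ \<longleftrightarrow> (\<forall>e::'a. idem e \<longrightarrow> central e)"

end

theory Submission
  imports Defs
begin

lemma ideal_mult_left: "is_ideal I \<Longrightarrow> x \<in> I \<Longrightarrow> r * x \<in> I"
  by (simp add: is_ideal_def)
lemma ideal_mult_right: "is_ideal I \<Longrightarrow> x \<in> I \<Longrightarrow> x * r \<in> I"
  by (simp add: is_ideal_def)
lemma ideal_neg: "is_ideal I \<Longrightarrow> x \<in> I \<Longrightarrow> - x \<in> I"
  by (simp add: is_ideal_def)
lemma ideal_zero: "is_ideal I \<Longrightarrow> 0 \<in> I"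
  by (simp add: is_ideal_def)

lemma central_idem_eq:
  fixes e g :: "'a::ring_1"
  assumes I: "is_ideal I" and fr: "idempotent_free I"
    and e: "e * e = e" and g: "g * g = g" and c: "\<And>y. g * y = y * g"
    and h: "e - g \<in> I \<or> e + g \<in> I"
  shows "e = g"
proof -
  have ge: "g * e = e * g" by (rule c)
  have ege: "e * g * e = e * g" by (metis ge e mult.assoc)
  have gge: "g * (g * e) = g * e" by (metis g mult.assoc)
  have egeg: "e * g * (e * g) = e * g" by (metis ege g mult.assoc)
  have gege: "g * e * (g * e) = g * e" using egeg ge by simp
  have gegmul: "g * e * g = g * e" by (metis ge g mult.assoc)
  have r1: "e * (e * g) = e * g" by (metis e mult.assoc)
  have r2: "e * (g * e) = e * g" by (metis ege mult.assoc)
  have r3: "e * (g * (e * g)) = e * g" by (metis egeg mult.assoc)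
  have r4: "g * (e * (g * e)) = g * e" by (metis gege mult.assoc)
  have r5: "g * (e * g) = g * e" by (metis gegmul mult.assoc)
  have r6: "e * (g * g) = e * g" by (simp add: g)
  have r7: "g * (e * e) = g * e" by (simp add: e)
  have i1: "idem (e - e * g)"
    unfolding idem_def by (simp add: algebra_simps e r1 r2 r3)
  have i2: "idem (g - g * e)"
    unfolding idem_def by (simp add: algebra_simps g r4 r5 gge)
  have both: "e - e * g \<in> I \<and> g - g * e \<in> I"
    using h
  proof
    assume a: "e - g \<in> I"
    have "(e - g) * (1 - g) = e - e * g" by (simp add: algebra_simps g)
    moreover have "(-(e - g)) * (1 - e) = g - g * e" by (simp add: algebra_simps e)
    ultimately show ?thesis using a ideal_mult_right[OF I] ideal_neg[OF I] by metis
  next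
    assume a: "e + g \<in> I"
    have eg_g: "e * g * g = e * g" by (simp add: g mult.assoc)
    have "(e - e * g) * (e + g) = e - e * g"
      by (simp add: algebra_simps e r1 r2 r6)
    moreover have "(g - g * e) * (e + g) = g - g * e"
      by (simp add: algebra_simps g r7 r5 gge)
    ultimately show ?thesis using a ideal_mult_left[OF I] by metis
  qed
  have "e - e * g = 0" using fr both i1 unfolding idempotent_free_def by blast
  moreover have "g - g * e = 0" using fr both i2 unfolding idempotent_free_def by blast
  ultimately show ?thesis using ge by simp
qed


lemma nil_sq: "(n::'a::ring_1) * n = 0 \<Longrightarrow> n \<in> Nil_set"
proof -
  assume "n * n = 0"
  hence "n ^ 2 = 0" by (simp add: power2_eq_square)
  thus ?thesis unfolding Nil_set_def by blast
qed

lemma uniq_abelian: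
  fixes e :: "'a::ring_1" and I :: "'a set"
  assumes I: "is_ideal I" and N: "Nil_set \<subseteq> I" and U: "lift_uniquely_weakly I"
    and e: "e * e = e"
  shows "central e"
proof -
  have x: "e\<^sup>2 - e \<in> I" using e ideal_zero[OF I] by (simp add: power2_eq_square)
  from U x have "\<exists>!f. f \<in> Idem \<and> (e - f \<in> I \<or> e + f \<in> I)"
    unfolding lift_uniquely_weakly_def by blast
  then obtain u where u: "\<And>f. f \<in> Idem \<and> (e - f \<in> I \<or> e + f \<in> I) \<Longrightarrow> f = u"
    by (rule ex1E) blast
  have eI: "e \<in> Idem" using e by (simp add: Idem_def idem_def)
  have "e - e \<in> I" using ideal_zero[OF I] by simp
  hence ee: "e = u" using eI by (intro u) blast
  show ?thesis unfolding central_def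
  proof
    fix r
    define n where "n = e * r * (1 - e)"
    define m where "m = (1 - e) * r * e"
    have ie: "(1 - e) * e = 0" by (simp add: left_diff_distrib e)
    have ei: "e * (1 - e) = 0" by (simp add: right_diff_distrib e)
    have ne: "n * e = 0" unfolding n_def by (simp only: mult.assoc ie mult_zero_right)
    have en: "e * n = n" unfolding n_def by (simp only: mult.assoc[symmetric] e)
    have me: "m * e = m" unfolding m_def by (simp only: mult.assoc e)
    have em: "e * m = 0" unfolding m_def by (simp only: mult.assoc[symmetric] ei mult_zero_left)
    have nn: "n * n = 0"
    proof -
      have "n * n = n * (e * n)" using en by simp
      also have "\<dots> = (n * e) * n" by (simp add: mult.assoc)
      finally show ?thesis using ne by simp
    qed
    have mm: "m * m = 0"
    proof -
      have "m * m = (m * e) * m" using me by simp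
      also have "\<dots> = m * (e * m)" by (simp add: mult.assoc)
      finally show ?thesis using em by simp
    qed
    have f1: "e + n \<in> Idem" unfolding Idem_def idem_def
      by (simp only: mem_Collect_eq distrib_left distrib_right e ne en nn add_0_right)
    have f2: "e + m \<in> Idem" unfolding Idem_def idem_def
      by (simp only: mem_Collect_eq distrib_left distrib_right e me em mm add_0_right add_0_left)
    have "n \<in> I" using nil_sq[OF nn] N by auto
    hence "e - (e + n) \<in> I" using ideal_neg[OF I] by simp
    hence "e + n = u" using f1 by (intro u) blast
    hence n0: "n = 0" using ee by simp
    have "m \<in> I" using nil_sq[OF mm] N by auto
    hence "e - (e + m) \<in> I" using ideal_neg[OF I] by simp
    hence "e + m = u" using f2 by (intro u) blast
    hence m0: "m = 0" using ee by simp
    have "e * r = e * r * e" using n0 unfolding n_def by (simp add: right_diff_distrib)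
    moreover have "r * e = e * r * e" using m0 unfolding m_def by (simp add: left_diff_distrib mult.assoc)
    ultimately show "e * r = r * e" by simp
  qed
qed

theorem mainTheorem6:
  fixes I :: "'a::ring_1 set"
  assumes "is_ideal I"
    and "Nil_set \<subseteq> I"
  shows "(lift_uniquely_weakly I
            \<longleftrightarrow> lift_weakly I \<and> abelian_ring TYPE('a) \<and> idempotent_free I)
       \<and> (lift_uniquely_weakly I
            \<longleftrightarrow> lift_centrally_weakly I \<and> idempotent_free I)"
proof -
  note I = assms(1)
  have A: "lift_uniquely_weakly I \<Longrightarrow> lift_weakly I \<and> abelian_ring TYPE('a) \<and> idempotent_free I"
  proof -
    assume U: "lift_uniquely_weakly I"
    have "lift_weakly I" using U unfolding lift_uniquely_weakly_def lift_weakly_def by blast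
    moreover have "abelian_ring TYPE('a)" unfolding abelian_ring_def idem_def
      using uniq_abelian[OF I assms(2) U] by blast
    moreover have "idempotent_free I" unfolding idempotent_free_def
    proof (intro ballI impI)
      fix e assume eI: "e \<in> I" and ie: "idem e"
      have x: "(0::'a)\<^sup>2 - 0 \<in> I" using ideal_zero[OF I] by simp
      from U x have "\<exists>!f. f \<in> Idem \<and> (0 - f \<in> I \<or> 0 + f \<in> I)"
        unfolding lift_uniquely_weakly_def by blast
      then obtain u where u: "\<And>f. f \<in> Idem \<and> (0 - f \<in> I \<or> 0 + f \<in> I) \<Longrightarrow> f = u"
        by (rule ex1E) blast
      have "e \<in> Idem" using ie by (simp add: Idem_def)
      hence "e = u" using eI by (intro u) simp
      moreover have "(0::'a) \<in> Idem" by (simp add: Idem_def idem_def)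
      hence "0 = u" using ideal_zero[OF I] by (intro u) simp
      ultimately show "e = 0" by simp
    qed
    ultimately show ?thesis by blast
  qed
  have B: "lift_weakly I \<and> abelian_ring TYPE('a) \<and> idempotent_free I \<Longrightarrow>
      lift_centrally_weakly I \<and> idempotent_free I"
    unfolding lift_weakly_def lift_centrally_weakly_def abelian_ring_def Idem_def by blast
  have C: "lift_centrally_weakly I \<and> idempotent_free I \<Longrightarrow> lift_uniquely_weakly I"
  proof -
    assume H: "lift_centrally_weakly I \<and> idempotent_free I"
    show "lift_uniquely_weakly I" unfolding lift_uniquely_weakly_def
    proof (intro allI impI)
      fix x :: 'a assume x: "x\<^sup>2 - x \<in> I"
      then obtain g where gI: "g \<in> Idem" and gc: "central g" and gx: "x - g \<in> I \<or> x + g \<in> I"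
        using H unfolding lift_centrally_weakly_def by blast
      have gg: "g * g = g" using gI by (simp add: Idem_def idem_def)
      have eq: "f = g" if fI: "f \<in> Idem" and fx: "x - f \<in> I \<or> x + f \<in> I" for f
      proof (rule central_idem_eq[OF I conjunct2[OF H]])
        show "f * f = f" using fI by (simp add: Idem_def idem_def)
        show "g * g = g" by (rule gg)
        show "\<And>y. g * y = y * g" using gc by (simp add: central_def)
        have sub: "a - b \<in> I" if "a \<in> I" "b \<in> I" for a b
          using that I unfolding is_ideal_def by (metis diff_conv_add_uminus)
        show "f - g \<in> I \<or> f + g \<in> I"
          using fx gx
        proof (elim disjE)
          assume "x - f \<in> I" "x - g \<in> I"
          from sub[OF this(2) this(1)] show ?thesis by simp
        next
          assume "x - f \<in> I" "x + g \<in> I"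
          from sub[OF this(2) this(1)] show ?thesis by (simp add: algebra_simps)
        next
          assume "x + f \<in> I" "x - g \<in> I"
          from sub[OF this(1) this(2)] show ?thesis by (simp add: algebra_simps)
        next
          assume "x + f \<in> I" "x + g \<in> I"
          from sub[OF this(1) this(2)] show ?thesis by (simp add: algebra_simps)
        qed
      qed
      show "\<exists>!e. e \<in> Idem \<and> (x - e \<in> I \<or> x + e \<in> I)"
        using gI gx eq by blast
    qed
  qed
  show ?thesis using A B C by blast
qed

end
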